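(* Let $A=\{1,2,3\}\cup\{5\cdot 2^i : i\ge 0\}=\{1,2,3,5,10,20,40,\dots\}$. Then for every $n\ge 1$, $\mathrm{Total}(n,A)=\lfloor 5\cdot 2^{n-2}-1\rfloor$ (i.e., the values are $1,4,9,19,39,79,\dots$).
   Context: For an integer $n\ge 0$ and a set $A$ of positive integers with $1\in A$, the abstract generalized 2048 game $\mathrm{AGG}(n,A)$ is played on $n$ indistinguishable cells. A position assigns to each cell either nothing (empty) or a tile with a value in $A$; the initial position has all cells empty. A step, performable from any position with at least one empty cell, consists of: (i) placing a new tile of value $1$ into a chosen empty cell; then (ii) optionally choosing pairwise disjoint sets of nonempty cells, each with tile-value sum in $A$, and merging each set into a single tile of that sum placed in one of its cells, the other cells of the set becoming empty. The game ends when after a step all cells are nonempty. A position is reachable if obtainable from the initial position by finitely many steps; its total value is the sum of its tile values. $\mathrm{Total}(n,A)$ is the supremum of total values of reachable positions of $\mathrm{AGG}(n,A)$. *)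

theory Defs
  imports Complex_Main "HOL-Library.Extended_Nat"
begin

text \<open>Positions of AGG(n,A): cells are the numbers 0..<n; a cell holds None (empty)
  or Some v (a tile of value v). Cells outside {..<n} stay empty.\<close>

type_synonym position = "nat \<Rightarrow> nat option"

definition merge :: "nat set \<Rightarrow> position \<Rightarrow> position \<Rightarrow> bool" where
  "merge A p q \<longleftrightarrow>
     (\<exists>F r. finite F \<and>
        (\<forall>S\<in>F. S \<noteq> {} \<and> finite S \<and> S \<subseteq> {i. p i \<noteq> None} \<and> r S \<in> S \<and>
                 (\<Sum>i\<in>S. the (p i)) \<in> A) \<and>
        (\<forall>S\<in>F. \<forall>T\<in>F. S \<noteq> T \<longrightarrow> S \<inter> T = {}) \<and>
        (\<forall>S\<in>F. q (r S) = Some (\<Sum>i\<in>S. the (p i)) \<and> (\<forall>i\<in>S - {r S}. q i = None)) \<and>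
        (\<forall>i. (\<forall>S\<in>F. i \<notin> S) \<longrightarrow> q i = p i))"

definition game_step :: "nat \<Rightarrow> nat set \<Rightarrow> position \<Rightarrow> position \<Rightarrow> bool" where
  "game_step n A p q \<longleftrightarrow> (\<exists>c<n. p c = None \<and> merge A (p(c := Some 1)) q)"

definition reachable :: "nat \<Rightarrow> nat set \<Rightarrow> position \<Rightarrow> bool" where
  "reachable n A p \<longleftrightarrow> (game_step n A)\<^sup>*\<^sup>* (\<lambda>_. None) p"

definition total_value :: "nat \<Rightarrow> position \<Rightarrow> nat" where
  "total_value n p = (\<Sum>i<n. case p i of None \<Rightarrow> 0 | Some v \<Rightarrow> v)"

definition Total :: "nat \<Rightarrow> nat set \<Rightarrow> enat" where
  "Total n A = (SUP p\<in>{p. reachable n A p}. enat (total_value n p))"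

end

theory Submission
  imports Defs
begin

abbreviation A0 :: "nat set" where "A0 \<equiv> {1, 2, 3} \<union> range (\<lambda>i::nat. 5 * 2 ^ i)"

definition mval :: "nat \<Rightarrow> nat" where
  "mval k = (if k = 0 then 0 else if k = 1 then 1 else if k = 2 then 3 else 5 * 2^(k-3))"

lemma mval_Suc_less: "mval k < mval (Suc k)"
proof -
  consider "k = 0" | "k = 1" | "k = 2" | "k \<ge> 3" by linarith
  then show ?thesis
  proof cases
    case 4
    then have "Suc k - 3 = Suc (k - 3)" by simp
    then show ?thesis using 4 by (simp add: mval_def)
  qed (auto simp: mval_def)
qed

lemma mval_less_iff: "mval a < mval b \<longleftrightarrow> a < b"
  using lift_Suc_mono_less_iff[of mval, OF mval_Suc_less] .

lemma mval_mono: "a \<le> b \<Longrightarrow> mval a \<le> mval b"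
  by (metis leD le_less_linear mval_less_iff)

lemma mval_pos: "k \<ge> 1 \<Longrightarrow> mval k \<ge> 1"
  using mval_mono[of 1 k] by (simp add: mval_def)

lemma mval_double: "k \<ge> 4 \<Longrightarrow> mval k = 2 * mval (k-1)"
proof -
  assume "k \<ge> 4"
  then have "k - 3 = Suc (k - 1 - 3)" "k \<noteq> 0" "k \<noteq> 1" "k \<noteq> 2" "k - 1 \<noteq> 0" "k - 1 \<noteq> 1" "k - 1 \<noteq> 2" by auto
  then show ?thesis unfolding mval_def by simp
qed

lemma mval_in: "k \<ge> 1 \<Longrightarrow> mval k \<in> A0"
  by (auto simp: mval_def)

definition Tsum :: "nat \<Rightarrow> nat" where "Tsum i = (\<Sum>l=1..i. mval l)"

lemma Tsum_Suc: "Tsum (Suc i) = Tsum i + mval (Suc i)"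
  by (simp add: Tsum_def)

lemma Tsum_1: "Tsum 1 = 1"
  by (simp add: Tsum_def mval_def)

lemma Tsum_SS: "Tsum (Suc (Suc j)) = 5 * 2^j - 1"
proof (induction j)
  case 0
  then show ?case by (simp add: Tsum_def mval_def)
next
  case (Suc j)
  have "Tsum (Suc (Suc (Suc j))) = Tsum (Suc (Suc j)) + mval (Suc (Suc (Suc j)))"
    by (rule Tsum_Suc)
  also have "mval (Suc (Suc (Suc j))) = 5 * 2^j" by (simp add: mval_def)
  finally show ?case using Suc by simp
qed

lemma mval_le_Tsum: "mval i \<le> Tsum i"
  by (cases i) (auto simp: Tsum_Suc Tsum_def mval_def)

lemma key: assumes "a \<in> A0" "1 \<le> i" "mval i < a" shows "Tsum i < a"
proof (cases "i = 1")
  case True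
  then show ?thesis using assms by (simp add: Tsum_def mval_def)
next
  case False
  then obtain j where j: "i = Suc (Suc j)" using assms(2)
    by (metis One_nat_def Suc_le_D le_SucE not_less_eq_eq)
  have "a > 3" using assms(3) mval_mono[of 2 i] j by (simp add: mval_def)
  then obtain k where k: "a = 5 * 2^k" using assms(1) by auto
  show ?thesis
  proof (cases j)
    case 0
    have "(1::nat) \<le> 2^k" by simp
    moreover have "Tsum i = 4" using j Tsum_SS[of 0] 0 by simp
    ultimately show ?thesis using k by linarith
  next
    case (Suc j')
    have "mval i = 5 * 2^j'" using j Suc by (simp add: mval_def)
    then have "(2::nat)^j' < 2^k" using assms(3) k by simp
    then have "j' < k" by simp
    then have "(2::nat)^j \<le> 2^k" using Suc by (intro power_increasing) auto
    moreover have "(1::nat) \<le> 2^j" by simp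
    moreover have "Tsum i = 5 * 2^j - 1" using j Tsum_SS[of j] by simp
    ultimately show ?thesis using k by linarith
  qed
qed

lemma arith_lemma:
  fixes d e t T :: nat
  assumes "d * (T + 1) \<le> T + e * t" "t \<le> T"
  shows "d \<le> e"
proof (rule ccontr)
  assume "\<not> d \<le> e"
  then have "Suc e \<le> d" by simp
  then have "Suc e * (T + 1) \<le> d * (T + 1)" by (rule mult_le_mono1)
  moreover have "e * t \<le> e * T" using assms(2) by (rule mult_le_mono2)
  moreover have "Suc e * (T + 1) = e * T + T + e + 1" by (simp add: algebra_simps)
  ultimately show False using assms(1) by linarith
qed

lemma layer:
  fixes f :: "'a \<Rightarrow> nat"
  assumes "finite Y"
  shows "(\<Sum>y\<in>Y. min (f y) t) = (\<Sum>u<t. card {y\<in>Y. u < f y})"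
proof -
  have "(\<Sum>y\<in>Y. min (f y) t) = (\<Sum>y\<in>Y. \<Sum>u<t. if u < f y then 1 else 0)"
  proof (rule sum.cong)
    fix y assume "y \<in> Y"
    have "(\<Sum>u<t. if u < f y then 1 else (0::nat)) = card {u\<in>{..<t}. u < f y}"
      by (simp add: sum.inter_filter[symmetric])
    also have "{u\<in>{..<t}. u < f y} = {..<min (f y) t}" by auto
    finally show "min (f y) t = (\<Sum>u<t. if u < f y then 1 else 0)" by simp
  qed simp
  also have "\<dots> = (\<Sum>u<t. \<Sum>y\<in>Y. if u < f y then 1 else 0)" by (rule sum.swap)
  also have "\<dots> = (\<Sum>u<t. card {y\<in>Y. u < f y})"
    using assms by (simp add: sum.inter_filter[symmetric])
  finally show ?thesis .
qed

lemma sum_min_mval: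
  assumes "1 \<le> i" "i \<le> n"
  shows "(\<Sum>l\<in>{1..n}. min (mval l) (mval i)) = Tsum i + (n - i) * mval i"
proof -
  have "{1..n} = {1..i} \<union> {Suc i..n}" using assms by auto
  then have "(\<Sum>l\<in>{1..n}. min (mval l) (mval i)) = (\<Sum>l\<in>{1..i}. min (mval l) (mval i)) + (\<Sum>l\<in>{Suc i..n}. min (mval l) (mval i))"
    by (simp add: sum.union_disjoint)
  also have "(\<Sum>l\<in>{1..i}. min (mval l) (mval i)) = Tsum i"
    unfolding Tsum_def by (rule sum.cong) (auto simp: mval_mono min_def)
  also have "(\<Sum>l\<in>{Suc i..n}. min (mval l) (mval i)) = (\<Sum>l\<in>{Suc i..n}. mval i)"
    by (rule sum.cong) (auto simp: min_def, metis Suc_le_lessD leD mval_less_iff)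
  finally show ?thesis by simp
qed


definition val :: "nat option \<Rightarrow> nat" where
  "val x = (case x of None \<Rightarrow> 0 | Some v \<Rightarrow> v)"

definition cnt :: "nat \<Rightarrow> position \<Rightarrow> nat \<Rightarrow> nat" where
  "cnt n p u = card {y\<in>{..<n}. u < val (p y)}"

definition BB :: "nat \<Rightarrow> nat \<Rightarrow> nat" where
  "BB n u = card {l\<in>{1..n}. u < mval l}"

definition INV :: "nat \<Rightarrow> position \<Rightarrow> bool" where
  "INV n p \<longleftrightarrow> (\<forall>i\<ge>n. p i = None) \<and> (\<forall>u. cnt n p u \<le> BB n u)"

lemma val_simps[simp]: "val None = 0" "val (Some v) = v"
  by (auto simp: val_def)

lemma BB_mval: assumes "1 \<le> i" "i \<le> n" shows "BB n (mval i) = n - i"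
proof -
  have "{l\<in>{1..n}. mval i < mval l} = {Suc i..n}" using assms by (auto simp: mval_less_iff)
  then show ?thesis by (simp add: BB_def)
qed

lemma BB_0: "BB n 0 = n"
proof -
  have "{l\<in>{1..n}. 0 < mval l} = {1..n}" using mval_pos by fastforce
  then show ?thesis by (simp add: BB_def)
qed

lemma sum_BB: assumes "1 \<le> i" "i \<le> n"
  shows "(\<Sum>u<mval i. BB n u) = Tsum i + (n - i) * mval i"
  using layer[of "{1..n}" mval "mval i"] sum_min_mval[OF assms] by (simp add: BB_def)

lemma thr_step:
  assumes inv: "INV n p" and c: "c < n" "p c = None"
    and p'_def: "p' = p(c := Some 1)"
    and Ffin: "finite F"
    and FS: "\<forall>S\<in>F. S \<noteq> {} \<and> finite S \<and> S \<subseteq> {i. p' i \<noteq> None} \<and> r S \<in> S \<and> (\<Sum>i\<in>S. the (p' i)) \<in> A0"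
    and Fdisj: "\<forall>S\<in>F. \<forall>T\<in>F. S \<noteq> T \<longrightarrow> S \<inter> T = {}"
    and Fq: "\<forall>S\<in>F. q (r S) = Some (\<Sum>i\<in>S. the (p' i)) \<and> (\<forall>i\<in>S - {r S}. q i = None)"
    and Fout: "\<forall>i. (\<forall>S\<in>F. i \<notin> S) \<longrightarrow> q i = p' i"
    and i: "1 \<le> i" "i \<le> n"
  shows "cnt n q (mval i) \<le> n - i"
proof -
  define t where "t = mval i"
  have t1: "1 \<le> t" using mval_pos i by (simp add: t_def)
  define big where "big X = {y\<in>{..<n}. t < val (X y)}" for X :: position
  have pn: "\<forall>i\<ge>n. p i = None" using inv by (simp add: INV_def)
  have p'n: "\<forall>i\<ge>n. p' i = None" using pn c by (simp add: p'_def)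
  have Sn: "S \<subseteq> {..<n}" if "S \<in> F" for S
  proof
    fix y assume "y \<in> S"
    then have "p' y \<noteq> None" using FS that by auto
    then have "\<not> n \<le> y" using p'n by auto
    then show "y \<in> {..<n}" by simp
  qed
  have bigp': "big p' = big p" using t1 c by (auto simp: big_def p'_def)
  have "cnt n p (mval i) \<le> BB n (mval i)" using inv by (simp add: INV_def)
  then have cle: "card (big p) \<le> n - i"
    using BB_mval[OF i] by (simp add: cnt_def big_def t_def)
  define U where "U X = (\<Sum>y<n. min (val (X y)) t)" for X :: position
  have "U p = (\<Sum>u<t. cnt n p u)" unfolding U_def cnt_def by (rule layer) simp
  also have "\<dots> < (\<Sum>u<t. BB n u)"
  proof (rule sum_strict_mono_ex1)
    show "\<forall>x\<in>{..<t}. cnt n p x \<le> BB n x" using inv by (simp add: INV_def)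
    have "{y\<in>{..<n}. 0 < val (p y)} \<subseteq> {..<n} - {c}" using c by auto
    then have "cnt n p 0 \<le> card ({..<n} - {c})" unfolding cnt_def by (intro card_mono) auto
    also have "\<dots> < n" using c by simp
    finally show "\<exists>a\<in>{..<t}. cnt n p a < BB n a" using t1 BB_0[of n] by (intro bexI[of _ 0]) auto
  qed simp
  also have "\<dots> = Tsum i + (n - i) * t" using sum_BB[OF i] by (simp add: t_def)
  finally have Up: "U p + 1 \<le> Tsum i + (n - i) * t" by simp
  have Up': "U p' = U p + 1"
  proof -
    have "U p' = min (val (p' c)) t + (\<Sum>y\<in>{..<n} - {c}. min (val (p' y)) t)"
      unfolding U_def using c by (simp add: sum.remove)
    also have "(\<Sum>y\<in>{..<n} - {c}. min (val (p' y)) t) = (\<Sum>y\<in>{..<n} - {c}. min (val (p y)) t)"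
      by (rule sum.cong) (auto simp: p'_def)
    also have "U p = min (val (p c)) t + (\<Sum>y\<in>{..<n} - {c}. min (val (p y)) t)"
      unfolding U_def using c by (simp add: sum.remove)
    moreover have "val (p' c) = 1" by (simp add: p'_def)
    ultimately show ?thesis using c t1 by simp
  qed
  define small where "small = (\<Sum>y\<in>{..<n} - big p'. val (p' y))"
  have Usplit: "U p' = small + t * card (big p')"
  proof -
    have "big p' \<subseteq> {..<n}" by (auto simp: big_def)
    then have "U p' = (\<Sum>y\<in>{..<n} - big p'. min (val (p' y)) t) + (\<Sum>y\<in>big p'. min (val (p' y)) t)"
      unfolding U_def by (simp add: sum.subset_diff)
    also have "(\<Sum>y\<in>{..<n} - big p'. min (val (p' y)) t) = small"
      unfolding small_def by (rule sum.cong) (auto simp: big_def)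
    also have "(\<Sum>y\<in>big p'. min (val (p' y)) t) = (\<Sum>y\<in>big p'. t)"
      by (rule sum.cong) (auto simp: big_def)
    finally show ?thesis by simp
  qed
  define sumS where "sumS S = (\<Sum>j\<in>S. the (p' j))" for S
  define F1 where "F1 = {S\<in>F. \<exists>y\<in>S. t < val (p' y)}"
  define F2 where "F2 = {S\<in>F. (\<forall>y\<in>S. val (p' y) \<le> t) \<and> t < sumS S}"
  have F2fin: "finite F2" using Ffin by (simp add: F2_def)
  have F1fin: "finite F1" using Ffin by (simp add: F1_def)
  have "card F2 * (Tsum i + 1) = (\<Sum>S\<in>F2. Tsum i + 1)" by simp
  also have "\<dots> \<le> (\<Sum>S\<in>F2. sumS S)"
  proof (rule sum_mono)
    fix S assume "S \<in> F2"
    then have "sumS S \<in> A0" "mval i < sumS S" using FS by (auto simp: F2_def sumS_def t_def)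
    then have "Tsum i < sumS S" by (intro key i(1))
    then show "Tsum i + 1 \<le> sumS S" by simp
  qed
  also have "\<dots> = (\<Sum>y\<in>\<Union>F2. the (p' y))"
    unfolding sumS_def using FS Fdisj by (subst sum.Union_disjoint) (auto simp: F2_def)
  also have "\<dots> = (\<Sum>y\<in>\<Union>F2. val (p' y))"
  proof (rule sum.cong)
    fix y assume "y \<in> \<Union>F2"
    then obtain S where "S \<in> F" "y \<in> S" by (auto simp: F2_def)
    then have "p' y \<noteq> None" using FS by blast
    then show "the (p' y) = val (p' y)" by (cases "p' y") auto
  qed simp
  also have "\<dots> \<le> small" unfolding small_def
  proof (rule sum_mono2)
    show "\<Union>F2 \<subseteq> {..<n} - big p'" using Sn by (auto simp: F2_def big_def not_less)
  qed auto
  finally have F2b: "card F2 * (Tsum i + 1) \<le> small" .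
  have "small + t * card (big p) \<le> Tsum i + (n - i) * t"
    using Up Up' Usplit bigp' by simp
  then have sm: "small + t * card (big p) \<le> Tsum i + (n - i) * t" .
  obtain e where e: "n - i = e + card (big p)" using cle le_Suc_ex
    by (metis add.commute le_add_diff_inverse)
  have "(n - i) * t = e * t + card (big p) * t" unfolding e by (rule add_mult_distrib)
  then have "small \<le> Tsum i + e * t" using sm by (simp add: mult.commute[of t])
  moreover have "e = n - i - card (big p)" using e by simp
  ultimately have "small \<le> Tsum i + (n - i - card (big p)) * t" by simp
  then have "card F2 * (Tsum i + 1) \<le> Tsum i + (n - i - card (big p)) * t"
    using F2b by (rule_tac order.trans)
  moreover have "t \<le> Tsum i" using mval_le_Tsum[of i] by (simp add: t_def)
  ultimately have F2c: "card F2 \<le> n - i - card (big p)"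
    by (rule arith_lemma)
  have F1c: "card F1 \<le> card (big p' \<inter> \<Union>F)"
  proof -
    have "card F1 = (\<Sum>S\<in>F1. 1)" by simp
    also have "\<dots> \<le> (\<Sum>S\<in>F1. card (S \<inter> big p'))"
    proof (rule sum_mono)
      fix S assume "S \<in> F1"
      then obtain y where "y \<in> S" "t < val (p' y)" "S \<in> F" by (auto simp: F1_def)
      then have "y \<in> S \<inter> big p'" using Sn by (auto simp: big_def)
      then show "1 \<le> card (S \<inter> big p')" using FS \<open>S \<in> F\<close>
        by (metis One_nat_def Suc_leI card_gt_0_iff empty_iff finite_Int)
    qed
    also have "\<dots> = card (\<Union>S\<in>F1. S \<inter> big p')"
      using F1fin FS Fdisj by (subst card_UN_disjoint) (auto simp: F1_def)
    also have "\<dots> \<le> card (big p' \<inter> \<Union>F)"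
      by (rule card_mono) (auto simp: big_def F1_def)
    finally show ?thesis .
  qed
  have sub: "big q \<subseteq> (big p' - \<Union>F) \<union> r ` F1 \<union> r ` F2"
  proof
    fix y assume y: "y \<in> big q"
    show "y \<in> (big p' - \<Union>F) \<union> r ` F1 \<union> r ` F2"
    proof (cases "\<exists>S\<in>F. y \<in> S")
      case False
      then show ?thesis using y Fout by (auto simp: big_def)
    next
      case True
      then obtain S where S: "S \<in> F" "y \<in> S" by blast
      have "y = r S"
      proof (rule ccontr)
        assume "y \<noteq> r S"
        then have "q y = None" using Fq S by auto
        then show False using y by (simp add: big_def)
      qed
      then have "t < sumS S" using y Fq S by (auto simp: big_def sumS_def)
      then have "S \<in> F1 \<or> S \<in> F2" using S by (auto simp: F1_def F2_def not_le)
      then show ?thesis using \<open>y = r S\<close> by auto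
    qed
  qed
  have fbig: "finite (big p')" by (simp add: big_def)
  have "cnt n q (mval i) = card (big q)" by (simp add: cnt_def big_def t_def)
  also have "\<dots> \<le> card ((big p' - \<Union>F) \<union> r ` F1 \<union> r ` F2)"
    using sub F1fin F2fin fbig by (intro card_mono) auto
  also have "\<dots> \<le> card (big p' - \<Union>F) + card (r ` F1) + card (r ` F2)"
    by (meson card_Un_le add_le_mono le_trans order_refl)
  also have "\<dots> \<le> card (big p' - \<Union>F) + card F1 + card F2"
    using F1fin F2fin by (intro add_mono card_image_le) auto
  also have "\<dots> \<le> card (big p' - \<Union>F) + card (big p' \<inter> \<Union>F) + card F2"
    using F1c by simp
  also have "card (big p' - \<Union>F) + card (big p' \<inter> \<Union>F) = card (big p')"
    using card_Int_Diff[OF fbig, of "\<Union>F"] by simp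
  finally show ?thesis using F2c cle bigp' by simp
qed


lemma step_inv:
  assumes inv: "INV n p" and st: "game_step n A0 p q"
  shows "INV n q"
proof -
  from st obtain c where c: "c < n" "p c = None" and mg: "merge A0 (p(c := Some 1)) q"
    unfolding game_step_def by blast
  define p' where "p' = p(c := Some 1)"
  from mg have mg': "merge A0 p' q" by (simp add: p'_def)
  then obtain F r where Ffin: "finite F"
    and FS: "\<forall>S\<in>F. S \<noteq> {} \<and> finite S \<and> S \<subseteq> {i. p' i \<noteq> None} \<and> r S \<in> S \<and> (\<Sum>i\<in>S. the (p' i)) \<in> A0"
    and Fdisj: "\<forall>S\<in>F. \<forall>T\<in>F. S \<noteq> T \<longrightarrow> S \<inter> T = {}"
    and Fq: "\<forall>S\<in>F. q (r S) = Some (\<Sum>i\<in>S. the (p' i)) \<and> (\<forall>i\<in>S - {r S}. q i = None)"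
    and Fout: "\<forall>i. (\<forall>S\<in>F. i \<notin> S) \<longrightarrow> q i = p' i"
    unfolding merge_def by (elim exE conjE) blast
  have thr: "cnt n q (mval i) \<le> n - i" if "1 \<le> i" "i \<le> n" for i
    using thr_step[OF inv c p'_def Ffin FS Fdisj Fq Fout that] .
  have pn: "\<forall>i\<ge>n. p i = None" using inv by (simp add: INV_def)
  have qn: "q i = None" if "n \<le> i" for i
  proof -
    have "p' i = None" using pn c that by (simp add: p'_def)
    then have "\<forall>S\<in>F. i \<notin> S" using FS by blast
    then show ?thesis using Fout \<open>p' i = None\<close> by simp
  qed
  have "cnt n q u \<le> BB n u" for u
  proof (cases "u = 0 \<or> n = 0")
    case True
    then show ?thesis
    proof
      assume "u = 0"
      have "cnt n q u \<le> card {..<n}" unfolding cnt_def by (rule card_mono) auto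
      then show ?thesis using BB_0 \<open>u = 0\<close> by simp
    next
      assume "n = 0"
      then show ?thesis by (simp add: cnt_def)
    qed
  next
    case False
    define L where "L = {l\<in>{1..n}. mval l \<le> u}"
    have L1: "1 \<in> L" using False by (simp add: L_def mval_def)
    have Lfin: "finite L" by (simp add: L_def)
    define i where "i = Max L"
    have iL: "i \<in> L" unfolding i_def using L1 Lfin by (intro Max_in) auto
    then have i: "1 \<le> i" "i \<le> n" "mval i \<le> u" by (auto simp: L_def)
    have "{l\<in>{1..n}. u < mval l} = {Suc i..n}"
    proof (intro set_eqI iffI)
      fix l assume l: "l \<in> {l\<in>{1..n}. u < mval l}"
      have "\<not> l \<le> i"
      proof
        assume "l \<le> i"
        then have "mval l \<le> mval i" by (rule mval_mono)
        then show False using l i by simp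
      qed
      then show "l \<in> {Suc i..n}" using l by auto
    next
      fix l assume l: "l \<in> {Suc i..n}"
      have "l \<notin> L"
      proof
        assume "l \<in> L"
        then have "l \<le> i" using Lfin by (simp add: i_def)
        then show False using l by simp
      qed
      then show "l \<in> {l\<in>{1..n}. u < mval l}" using l i by (auto simp: L_def)
    qed
    then have "BB n u = n - i" by (simp add: BB_def)
    moreover have "cnt n q u \<le> cnt n q (mval i)"
      unfolding cnt_def using i by (intro card_mono) auto
    ultimately show ?thesis using thr[OF i(1,2)] by simp
  qed
  then show ?thesis using qn by (simp add: INV_def)
qed

lemma reach_INV: assumes "reachable n A0 p" shows "INV n p"
proof -
  have "(game_step n A0)\<^sup>*\<^sup>* (\<lambda>_. None) p" using assms by (simp add: reachable_def)
  then show ?thesis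
  proof (induction rule: rtranclp_induct)
    case base
    then show ?case by (simp add: INV_def cnt_def)
  next
    case (step y z)
    then show ?case using step_inv by blast
  qed
qed

lemma total_le: assumes "reachable n A0 p" shows "total_value n p \<le> Tsum n"
proof (cases "n = 0")
  case True
  then show ?thesis by (simp add: total_value_def)
next
  case False
  then have n1: "1 \<le> n" by simp
  have inv: "INV n p" using reach_INV[OF assms] .
  have "cnt n p (mval n) \<le> BB n (mval n)" using inv by (simp add: INV_def)
  then have "cnt n p (mval n) = 0" using BB_mval[OF n1 order_refl] by simp
  then have E: "{y\<in>{..<n}. mval n < val (p y)} = {}" by (simp add: cnt_def)
  have le: "val (p y) \<le> mval n" if "y < n" for y
  proof (rule ccontr)
    assume "\<not> val (p y) \<le> mval n"
    then have "y \<in> {y\<in>{..<n}. mval n < val (p y)}" using that by simp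
    then show False using E by blast
  qed
  have "total_value n p = (\<Sum>y<n. val (p y))"
    unfolding total_value_def val_def ..
  also have "\<dots> = (\<Sum>y<n. min (val (p y)) (mval n))"
    by (rule sum.cong) (auto simp: le min_def)
  also have "\<dots> = (\<Sum>u<mval n. cnt n p u)" unfolding cnt_def by (rule layer) simp
  also have "\<dots> \<le> (\<Sum>u<mval n. BB n u)" using inv by (intro sum_mono) (simp add: INV_def)
  also have "\<dots> = Tsum n" using sum_BB[OF n1 order_refl] by simp
  finally show ?thesis .
qed


lemma step1:
  assumes e: "e < n" "p e = None" and W: "finite W" "W \<subseteq> {i. p i \<noteq> None}"
    and A: "(\<Sum>j\<in>W. the (p j)) + 1 \<in> A"
    and q: "\<And>i. q i = (if i = e then Some ((\<Sum>j\<in>W. the (p j)) + 1) else if i \<in> W then None else p i)"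
  shows "game_step n A p q"
proof -
  define p' where "p' = p(e := Some 1)"
  have eW: "e \<notin> W" using W e by auto
  have sumeq: "(\<Sum>j\<in>insert e W. the (p' j)) = (\<Sum>j\<in>W. the (p j)) + 1"
  proof -
    have "(\<Sum>j\<in>insert e W. the (p' j)) = the (p' e) + (\<Sum>j\<in>W. the (p' j))"
      using eW W by simp
    also have "(\<Sum>j\<in>W. the (p' j)) = (\<Sum>j\<in>W. the (p j))"
      using eW by (intro sum.cong) (auto simp: p'_def)
    finally show ?thesis by (simp add: p'_def)
  qed
  have "merge A p' q"
    unfolding merge_def
  proof (intro exI[of _ "{insert e W}"] exI[of _ "\<lambda>_. e"] conjI)
    show "\<forall>S\<in>{insert e W}. S \<noteq> {} \<and> finite S \<and> S \<subseteq> {i. p' i \<noteq> None} \<and> e \<in> S \<and> (\<Sum>i\<in>S. the (p' i)) \<in> A"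
      using W A sumeq by (auto simp: p'_def)
    show "\<forall>S\<in>{insert e W}. q e = Some (\<Sum>i\<in>S. the (p' i)) \<and> (\<forall>i\<in>S - {e}. q i = None)"
      using sumeq q by auto
    show "\<forall>i. (\<forall>S\<in>{insert e W}. i \<notin> S) \<longrightarrow> q i = p' i"
      using q by (auto simp: p'_def)
  qed auto
  then show ?thesis unfolding game_step_def p'_def using e by blast
qed

lemma build:
  "1 \<le> k \<Longrightarrow> finite E \<Longrightarrow> card E = k \<Longrightarrow> E \<subseteq> {..<n} \<Longrightarrow> (\<forall>i\<in>E. p i = None)
   \<Longrightarrow> finite W \<Longrightarrow> W \<subseteq> {i. p i \<noteq> None} \<Longrightarrow> w = (\<Sum>j\<in>W. the (p j)) \<Longrightarrow> w + mval k \<in> A0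
   \<Longrightarrow> \<exists>z\<in>E. (game_step n A0)\<^sup>*\<^sup>* p
        (\<lambda>i. if i = z then Some (w + mval k) else if i \<in> E \<union> W then None else p i)"
proof (induction k arbitrary: p E W w rule: less_induct)
  case (less k)
  note H = less.prems
  have EW: "i \<notin> W" if "i \<in> E" for i using H(5,7) that by auto
  consider "k = 1" | "k = 2" | "k = 3" | "k \<ge> 4" using H(1) by linarith
  then show ?case
  proof cases
    case 1
    then obtain e where E: "E = {e}" using H(3) card_1_singletonE by blast
    have "game_step n A0 p (\<lambda>i. if i = e then Some (w + mval k) else if i \<in> E \<union> W then None else p i)"
      by (rule step1[where W = W and e = e]) (use H E 1 in \<open>auto simp: mval_def\<close>)
    then show ?thesis using E by auto
  next
    case 2
    then obtain a b where E: "E = {a, b}" "a \<noteq> b" using H(3) card_2_iff by metis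
    have abn: "a < n" "b < n" "p a = None" "p b = None" using H E by auto
    define p1 where "p1 = p(a := Some 1)"
    define p2 where "p2 = p(b := Some 2)"
    define p3 where "p3 = (\<lambda>i. if i = a then Some (w + mval k) else if i \<in> E \<union> W then None else p i)"
    have s1: "game_step n A0 p p1"
      by (rule step1[where W = "{}" and e = a]) (use abn in \<open>auto simp: p1_def\<close>)
    have s2: "game_step n A0 p1 p2"
      by (rule step1[where W = "{a}" and e = b]) (use abn E in \<open>auto simp: p1_def p2_def\<close>)
    have sW: "(\<Sum>j\<in>insert b W. the (p2 j)) = w + 2"
    proof -
      have "(\<Sum>j\<in>insert b W. the (p2 j)) = the (p2 b) + (\<Sum>j\<in>W. the (p2 j))"
        using EW E H(6) by simp
      also have "(\<Sum>j\<in>W. the (p2 j)) = w"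
        unfolding H(8) using EW E by (intro sum.cong) (auto simp: p2_def)
      finally show ?thesis by (simp add: p2_def)
    qed
    have w3: "w + 3 \<in> A0" using H(9) 2 by (simp add: mval_def)
    have s3: "game_step n A0 p2 p3"
    proof (rule step1[where W = "insert b W" and e = a])
      have eq: "(\<Sum>j\<in>insert b W. the (p2 j)) + 1 = w + 3" using sW by simp
      show "(\<Sum>j\<in>insert b W. the (p2 j)) + 1 \<in> A0" unfolding eq by (rule w3)
    qed (use abn E H EW sW 2 in \<open>auto simp: p2_def p3_def mval_def\<close>)
    have "(game_step n A0)\<^sup>*\<^sup>* p p3" using s1 s2 s3 by auto
    then show ?thesis unfolding p3_def using E by auto
  next
    case 3
    then obtain a b c where E: "E = {a, b, c}" "a \<noteq> b" "b \<noteq> c" "a \<noteq> c" using H(3) card_3_iff by metis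
    have abn: "a < n" "b < n" "c < n" "p a = None" "p b = None" "p c = None" using H E by auto
    define p1 where "p1 = p(a := Some 1)"
    define p2 where "p2 = p(b := Some 2)"
    define p3 where "p3 = p(a := Some 3)"
    define p4 where "p4 = p(a := Some 3, b := Some 1)"
    define p5 where "p5 = (\<lambda>i. if i = c then Some (w + mval k) else if i \<in> E \<union> W then None else p i)"
    have s1: "game_step n A0 p p1"
      by (rule step1[where W = "{}" and e = a]) (use abn in \<open>auto simp: p1_def\<close>)
    have s2: "game_step n A0 p1 p2"
      by (rule step1[where W = "{a}" and e = b]) (use abn E in \<open>auto simp: p1_def p2_def\<close>)
    have s3: "game_step n A0 p2 p3"
      by (rule step1[where W = "{b}" and e = a]) (use abn E in \<open>auto simp: p2_def p3_def\<close>)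
    have s4: "game_step n A0 p3 p4"
      by (rule step1[where W = "{}" and e = b]) (use abn E in \<open>auto simp: p3_def p4_def\<close>)
    have sW: "(\<Sum>j\<in>insert a (insert b W). the (p4 j)) = w + 4"
    proof -
      have "(\<Sum>j\<in>insert a (insert b W). the (p4 j)) = the (p4 a) + (the (p4 b) + (\<Sum>j\<in>W. the (p4 j)))"
        using EW E H(6) by simp
      also have "(\<Sum>j\<in>W. the (p4 j)) = w"
        unfolding H(8) using EW E by (intro sum.cong) (auto simp: p4_def)
      finally show ?thesis using E by (simp add: p4_def)
    qed
    have w5: "w + 5 \<in> A0" using H(9) 3 by (simp add: mval_def)
    have s5: "game_step n A0 p4 p5"
    proof (rule step1[where W = "insert a (insert b W)" and e = c])
      have eq: "(\<Sum>j\<in>insert a (insert b W). the (p4 j)) + 1 = w + 5" using sW by simp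
      show "(\<Sum>j\<in>insert a (insert b W). the (p4 j)) + 1 \<in> A0" unfolding eq by (rule w5)
    qed (use abn E H EW sW 3 in \<open>auto simp: p4_def p5_def mval_def\<close>)
    have "(game_step n A0)\<^sup>*\<^sup>* p p5" using s1 s2 s3 s4 s5 by auto
    then show ?thesis unfolding p5_def using E by auto
  next
    case 4
    then have "E \<noteq> {}" using H(3) by auto
    then obtain x where x: "x \<in> E" by blast
    define E' where "E' = E - {x}"
    have E': "finite E'" "card E' = k - 1" "E' \<subseteq> {..<n}" "\<forall>i\<in>E'. p i = None"
      using H x by (auto simp: E'_def)
    have "\<exists>z\<in>E'. (game_step n A0)\<^sup>*\<^sup>* p
        (\<lambda>i. if i = z then Some (0 + mval (k-1)) else if i \<in> E' \<union> {} then None else p i)"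
      by (rule less.IH[of "k-1" E' p "{}"]) (use 4 E' mval_in[of "k-1"] in auto)
    then obtain z where z: "z \<in> E'" and r1: "(game_step n A0)\<^sup>*\<^sup>* p
        (\<lambda>i. if i = z then Some (0 + mval (k-1)) else if i \<in> E' \<union> {} then None else p i)" by blast
    define p1 where "p1 = (\<lambda>i. if i = z then Some (mval (k-1)) else if i \<in> E' then None else p i)"
    have "(\<lambda>i. if i = z then Some (0 + mval (k-1)) else if i \<in> E' \<union> {} then None else p i) = p1"
      by (simp add: p1_def fun_eq_iff)
    with r1 have r1': "(game_step n A0)\<^sup>*\<^sup>* p p1" by simp
    have zE: "z \<in> E" using z by (simp add: E'_def)
    have p1W: "p1 i = p i" if "i \<in> W" for i
      using EW[of i] that zE by (auto simp: p1_def E'_def)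
    have sW: "(\<Sum>j\<in>insert z W. the (p1 j)) = mval (k-1) + w"
    proof -
      have "(\<Sum>j\<in>insert z W. the (p1 j)) = the (p1 z) + (\<Sum>j\<in>W. the (p1 j))"
        using EW[OF zE] H(6) by simp
      also have "(\<Sum>j\<in>W. the (p1 j)) = w"
        unfolding H(8) using p1W by (intro sum.cong) auto
      finally show ?thesis by (simp add: p1_def)
    qed
    have cz: "card (E - {z}) = k - 1" using H zE by simp
    have "\<exists>z'\<in>E - {z}. (game_step n A0)\<^sup>*\<^sup>* p1
        (\<lambda>i. if i = z' then Some ((mval (k-1) + w) + mval (k-1)) else if i \<in> (E - {z}) \<union> insert z W then None else p1 i)"
    proof (rule less.IH[of "k-1" "E - {z}" p1 "insert z W"])
      show "k - 1 < k" "1 \<le> k - 1" using 4 by auto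
      show "finite (E - {z})" "card (E - {z}) = k - 1" "E - {z} \<subseteq> {..<n}" using H cz by auto
      show "\<forall>i\<in>E - {z}. p1 i = None" using H by (auto simp: p1_def E'_def)
      show "finite (insert z W)" using H by simp
      show "insert z W \<subseteq> {i. p1 i \<noteq> None}"
      proof
        fix i assume i: "i \<in> insert z W"
        show "i \<in> {i. p1 i \<noteq> None}"
        proof (cases "i = z")
          case True
          then show ?thesis by (simp add: p1_def)
        next
          case False
          then have "i \<in> W" using i by simp
          then show ?thesis using p1W H(7) by auto
        qed
      qed
      show "mval (k - 1) + w = (\<Sum>j\<in>insert z W. the (p1 j))" using sW by simp
      have "mval (k - 1) + w + mval (k - 1) = w + mval k" using mval_double[OF 4] by simp
      then show "mval (k - 1) + w + mval (k - 1) \<in> A0" using H(9) by (rule ssubst)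
    qed
    then obtain z' where z': "z' \<in> E - {z}" and r2: "(game_step n A0)\<^sup>*\<^sup>* p1
        (\<lambda>i. if i = z' then Some ((mval (k-1) + w) + mval (k-1)) else if i \<in> (E - {z}) \<union> insert z W then None else p1 i)"
      by blast
    have eq: "(\<lambda>i. if i = z' then Some ((mval (k-1) + w) + mval (k-1)) else if i \<in> (E - {z}) \<union> insert z W then None else p1 i)
      = (\<lambda>i. if i = z' then Some (w + mval k) else if i \<in> E \<union> W then None else p i)"
    proof
      fix i
      show "(if i = z' then Some ((mval (k-1) + w) + mval (k-1)) else if i \<in> (E - {z}) \<union> insert z W then None else p1 i)
        = (if i = z' then Some (w + mval k) else if i \<in> E \<union> W then None else p i)"
        using mval_double[OF 4] zE by (auto simp: p1_def E'_def)
    qed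
    have "(game_step n A0)\<^sup>*\<^sup>* p
        (\<lambda>i. if i = z' then Some ((mval (k-1) + w) + mval (k-1)) else if i \<in> (E - {z}) \<union> insert z W then None else p1 i)"
      using r1' r2 by (rule rtranclp_trans)
    then have "(game_step n A0)\<^sup>*\<^sup>* p (\<lambda>i. if i = z' then Some (w + mval k) else if i \<in> E \<union> W then None else p i)"
      unfolding eq .
    moreover have "z' \<in> E" using z' by simp
    ultimately show ?thesis by blast
  qed
qed

lemma total_upd:
  assumes "z < n" "p z = None"
  shows "total_value n (p(z := Some v)) = total_value n p + v"
proof -
  have "total_value n (p(z := Some v)) = v + (\<Sum>i\<in>{..<n} - {z}. case p i of None \<Rightarrow> 0 | Some v \<Rightarrow> v)"
    unfolding total_value_def using assms by (simp add: sum.remove)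
  moreover have "total_value n p = 0 + (\<Sum>i\<in>{..<n} - {z}. case p i of None \<Rightarrow> 0 | Some v \<Rightarrow> v)"
    unfolding total_value_def using assms by (simp add: sum.remove)
  ultimately show ?thesis by simp
qed

lemma fill:
  "finite E \<Longrightarrow> card E = k \<Longrightarrow> E \<subseteq> {..<n} \<Longrightarrow> (\<forall>i\<in>E. p i = None)
   \<Longrightarrow> \<exists>q. (game_step n A0)\<^sup>*\<^sup>* p q \<and> total_value n q = total_value n p + Tsum k"
proof (induction k arbitrary: p E)
  case 0
  then show ?case by (auto simp: Tsum_def)
next
  case (Suc k)
  have "\<exists>z\<in>E. (game_step n A0)\<^sup>*\<^sup>* p
        (\<lambda>i. if i = z then Some (0 + mval (Suc k)) else if i \<in> E \<union> {} then None else p i)"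
    by (rule build[of "Suc k" E n p "{}"]) (use Suc.prems mval_in[of "Suc k"] in auto)
  then obtain z where z: "z \<in> E" and r: "(game_step n A0)\<^sup>*\<^sup>* p
        (\<lambda>i. if i = z then Some (0 + mval (Suc k)) else if i \<in> E \<union> {} then None else p i)" by blast
  define p1 where "p1 = p(z := Some (mval (Suc k)))"
  have "(\<lambda>i. if i = z then Some (0 + mval (Suc k)) else if i \<in> E \<union> {} then None else p i) = p1"
    using Suc.prems by (auto simp: p1_def)
  with r have r1: "(game_step n A0)\<^sup>*\<^sup>* p p1" by simp
  have t1: "total_value n p1 = total_value n p + mval (Suc k)"
    unfolding p1_def using z Suc.prems by (intro total_upd) auto
  have "\<exists>q. (game_step n A0)\<^sup>*\<^sup>* p1 q \<and> total_value n q = total_value n p1 + Tsum k"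
    by (rule Suc.IH[of "E - {z}"]) (use Suc.prems z in \<open>auto simp: p1_def\<close>)
  then obtain q where "(game_step n A0)\<^sup>*\<^sup>* p1 q" "total_value n q = total_value n p1 + Tsum k" by blast
  then show ?case using r1 t1 by (intro exI[of _ q]) (auto simp: Tsum_Suc intro: rtranclp_trans)
qed


lemma num_eq: assumes "n \<ge> 1" shows "nat \<lfloor>(5::real) * 2 powr (real n - 2) - 1\<rfloor> = Tsum n"
proof (cases "n = 1")
  case True
  have "(2::real) powr (real n - 2) = 1 / 2" using True
    by (simp add: powr_minus_divide)
  then have e: "(5::real) * 2 powr (real n - 2) - 1 = 3 / 2" by simp
  have "\<lfloor>(5::real) * 2 powr (real n - 2) - 1\<rfloor> = 1" unfolding e by (simp add: floor_eq_iff)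
  then show ?thesis using True Tsum_1 by simp
next
  case False
  then obtain j where j: "n = Suc (Suc j)" using assms
    by (metis One_nat_def Suc_le_D le_SucE not_less_eq_eq)
  have "real n - 2 = real j" using j by simp
  then have "(2::real) powr (real n - 2) = 2 ^ j" by (simp add: powr_realpow)
  moreover have "(1::nat) \<le> 5 * 2 ^ j" by simp
  ultimately have "(5::real) * 2 powr (real n - 2) - 1 = real (5 * 2 ^ j - 1)"
    by (simp add: of_nat_diff)
  then have "\<lfloor>(5::real) * 2 powr (real n - 2) - 1\<rfloor> = int (5 * 2 ^ j - 1)"
    by (simp only: floor_of_nat)
  then have "nat \<lfloor>(5::real) * 2 powr (real n - 2) - 1\<rfloor> = 5 * 2 ^ j - 1"
    by (simp only: nat_int)
  then show ?thesis using j Tsum_SS[of j] by simp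
qed

theorem mainTheorem14:
  fixes n :: nat
  assumes "n \<ge> 1"
  shows "Total n ({1, 2, 3} \<union> range (\<lambda>i::nat. 5 * 2 ^ i))
           = enat (nat \<lfloor>(5::real) * 2 powr (real n - 2) - 1\<rfloor>)"
proof -
  have le: "Total n A0 \<le> enat (Tsum n)"
    unfolding Total_def
  proof (rule SUP_least)
    fix p assume "p \<in> {p. reachable n A0 p}"
    then have "reachable n A0 p" by simp
    then have "total_value n p \<le> Tsum n" by (rule total_le)
    then show "enat (total_value n p) \<le> enat (Tsum n)" by simp
  qed
  have "\<exists>q. (game_step n A0)\<^sup>*\<^sup>* (\<lambda>_. None) q \<and> total_value n q = total_value n (\<lambda>_. None) + Tsum n"
    by (rule fill[of "{..<n}" n n "\<lambda>_. None"]) auto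
  then obtain q where q: "reachable n A0 q" "total_value n q = Tsum n"
    by (auto simp: reachable_def total_value_def)
  have "enat (total_value n q) \<le> Total n A0"
    unfolding Total_def using q(1) by (intro SUP_upper) simp
  then have "Total n A0 = enat (Tsum n)" using le q(2) by (simp add: antisym)
  then show ?thesis using num_eq[OF assms] by simp
qed

end
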